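(* Let $\varrho:\mathcal{Z}\to\mathbb{R}\cup\{+\infty\}$ be a coherent risk measure with preference to small outcomes which is normalized, i.e. $\varrho[\mathbb{I}]=1$. Then for every $\zeta\in\operatorname{dom}\varrho^*$, $\int_\Omega\langle\mathbf{1},\zeta(\omega)\rangle\,P(d\omega)=1$.
   Context: $(\Omega,\mathcal{F},P)$ is a probability space, $m\ge1$, $p\in[1,\infty)$, $\mathcal{Z}=\mathcal{L}_p(\Omega,\mathcal{F},P;\mathbb{R}^m)$ with norm topology, $\mathcal{Z}^*=\mathcal{L}_q(\Omega,\mathcal{F},P;\mathbb{R}^m)$, $1/p+1/q=1$, pairing $\langle\zeta,X\rangle=\int_\Omega\langle\zeta(\omega),X(\omega)\rangle\,dP(\omega)$. $\mathbf{1}\in\mathbb{R}^m$ is the all-ones vector, $\mathbb{I}$ the constant random vector equal to $\mathbf{1}$. A coherent risk measure with preference to small outcomes is a lower semicontinuous functional $\varrho:\mathcal{Z}\to\mathbb{R}\cup\{+\infty\}$ with nonempty domain satisfying: (A1) convexity; (A2) $X_i\ge Y_i$ a.s. for all $i$ implies $\varrho[X]\ge\varrho[Y]$; (A3) $\varrho[tX]=t\varrho[X]$ for $t>0$; (A4) $\varrho[X+a\mathbb{I}]=\varrho[X]+a\varrho[\mathbb{I}]$ for all $X$, $a\in\mathbb{R}$. $\varrho^*[\zeta]=\sup_X\{\langle\zeta,X\rangle-\varrho[X]\}$ and $\operatorname{dom}\varrho^*=\{\zeta:\varrho^*[\zeta]<\infty\}$. *)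

theory Defs
  imports "HOL-Probability.Probability"
begin

text \<open>The space Z = L_p(Omega,F,P;R^m), represented by (measurable) representatives.\<close>
definition Lp_space :: "'a measure \<Rightarrow> real \<Rightarrow> ('a \<Rightarrow> real^'m) set" where
  "Lp_space M p = {X. X \<in> borel_measurable M \<and> integrable M (\<lambda>\<omega>. norm (X \<omega>) powr p)}"

text \<open>The dual space Z* = L_q with 1/p + 1/q = 1 (q = infinity when p = 1).\<close>
definition Lq_space :: "'a measure \<Rightarrow> real \<Rightarrow> ('a \<Rightarrow> real^'m) set" where
  "Lq_space M p =
     (if p = 1 then {Z. Z \<in> borel_measurable M \<and> (\<exists>C. AE \<omega> in M. norm (Z \<omega>) \<le> C)}
      else {Z. Z \<in> borel_measurable M \<and> integrable M (\<lambda>\<omega>. norm (Z \<omega>) powr (p / (p - 1)))})"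

definition pairing :: "'a measure \<Rightarrow> ('a \<Rightarrow> real^'m) \<Rightarrow> ('a \<Rightarrow> real^'m) \<Rightarrow> real" where
  "pairing M Z X = (LINT \<omega>|M. inner (Z \<omega>) (X \<omega>))"

definition one_rv :: "'a \<Rightarrow> real^'m" where
  "one_rv = (\<lambda>\<omega>. \<chi> i. 1)"

definition coherent_risk_measure ::
  "'a measure \<Rightarrow> real \<Rightarrow> (('a \<Rightarrow> real^'m) \<Rightarrow> ereal) \<Rightarrow> bool" where
  "coherent_risk_measure M p \<rho> \<longleftrightarrow>
     (\<forall>X\<in>Lp_space M p. \<rho> X \<noteq> -\<infinity>)
   \<and> (\<exists>X\<in>Lp_space M p. \<rho> X < \<infinity>)
   \<comment> \<open>lower semicontinuity w.r.t. the L_p norm\<close>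
   \<and> (\<forall>X\<in>Lp_space M p. \<forall>Xs. (\<forall>n. Xs n \<in> Lp_space M p) \<and>
          ((\<lambda>n. (LINT \<omega>|M. norm (Xs n \<omega> - X \<omega>) powr p)) \<longlonglongrightarrow> 0)
          \<longrightarrow> \<rho> X \<le> liminf (\<lambda>n. \<rho> (Xs n)))
   \<comment> \<open>(A1) convexity\<close>
   \<and> (\<forall>X\<in>Lp_space M p. \<forall>Y\<in>Lp_space M p. \<forall>t::real. 0 \<le> t \<and> t \<le> 1 \<longrightarrow>
          \<rho> (\<lambda>\<omega>. t *\<^sub>R X \<omega> + (1 - t) *\<^sub>R Y \<omega>) \<le> ereal t * \<rho> X + ereal (1 - t) * \<rho> Y)
   \<comment> \<open>(A2) monotonicity\<close>
   \<and> (\<forall>X\<in>Lp_space M p. \<forall>Y\<in>Lp_space M p.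
          (AE \<omega> in M. \<forall>i. X \<omega> $ i \<ge> Y \<omega> $ i) \<longrightarrow> \<rho> X \<ge> \<rho> Y)
   \<comment> \<open>(A3) positive homogeneity\<close>
   \<and> (\<forall>X\<in>Lp_space M p. \<forall>t::real. t > 0 \<longrightarrow> \<rho> (\<lambda>\<omega>. t *\<^sub>R X \<omega>) = ereal t * \<rho> X)
   \<comment> \<open>(A4) translation equivariance\<close>
   \<and> (\<forall>X\<in>Lp_space M p. \<forall>a::real.
          \<rho> (\<lambda>\<omega>. X \<omega> + a *\<^sub>R one_rv \<omega>) = \<rho> X + ereal a * \<rho> one_rv)"

definition risk_conj ::
  "'a measure \<Rightarrow> real \<Rightarrow> (('a \<Rightarrow> real^'m) \<Rightarrow> ereal) \<Rightarrow> ('a \<Rightarrow> real^'m) \<Rightarrow> ereal" where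
  "risk_conj M p \<rho> Z = (SUP X\<in>Lp_space M p. ereal (pairing M Z X) - \<rho> X)"

end

theory Submission
  imports Defs
begin

lemma const_in_Lp:
  assumes "prob_space M"
  shows "(\<lambda>\<omega>. c) \<in> Lp_space M p"
proof -
  interpret prob_space M by fact
  show ?thesis unfolding Lp_space_def by simp
qed

theorem corollary2:
  fixes M :: "'a measure" and p :: real and \<rho> :: "('a \<Rightarrow> real^'m) \<Rightarrow> ereal"
    and \<zeta> :: "'a \<Rightarrow> real^'m"
  assumes "prob_space M"
    and "1 \<le> p"
    and "coherent_risk_measure M p \<rho>"
    and "\<rho> one_rv = 1"
    and "\<zeta> \<in> Lq_space M p"
    and "risk_conj M p \<rho> \<zeta> < \<infinity>"
  shows "(LINT \<omega>|M. inner (\<chi> i. 1) (\<zeta> \<omega>)) = 1"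
proof -
  interpret P: prob_space M by fact
  note C = assms(3)[unfolded coherent_risk_measure_def]
  from C obtain X0 where X0: "X0 \<in> Lp_space M p" "\<rho> X0 < \<infinity>" by blast
  have X0ninf: "\<rho> X0 \<noteq> -\<infinity>" using C X0 by blast
  then obtain r where r: "\<rho> X0 = ereal r" using X0(2) by (cases "\<rho> X0") auto
  have Z0: "(\<lambda>\<omega>. 0::real^'m) \<in> Lp_space M p" using const_in_Lp[OF assms(1)] .
  define Xs where "Xs = (\<lambda>n::nat. \<lambda>\<omega>. (1 / (real n + 1)) *\<^sub>R X0 \<omega>)"
  have meas: "X0 \<in> borel_measurable M" and intX: "integrable M (\<lambda>\<omega>. norm (X0 \<omega>) powr p)"
    using X0(1) unfolding Lp_space_def by auto
  have eqn: "\<And>n \<omega>. norm (Xs n \<omega> - 0) powr p = (1 / (real n + 1)) powr p * norm (X0 \<omega>) powr p"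
    unfolding Xs_def by (simp add: powr_divide)
  have Xs_in: "\<forall>n. Xs n \<in> Lp_space M p"
  proof
    fix n
    have "integrable M (\<lambda>\<omega>. (1 / (real n + 1)) powr p * norm (X0 \<omega>) powr p)"
      using intX by simp
    moreover have "Xs n \<in> borel_measurable M" unfolding Xs_def using meas by simp
    ultimately show "Xs n \<in> Lp_space M p" unfolding Lp_space_def
      using eqn by simp
  qed
  have lim: "(\<lambda>n. (LINT \<omega>|M. norm (Xs n \<omega> - (\<lambda>\<omega>. 0::real^'m) \<omega>) powr p)) \<longlonglongrightarrow> 0"
  proof -
    have "(\<lambda>n. (LINT \<omega>|M. norm (Xs n \<omega> - (\<lambda>\<omega>. 0::real^'m) \<omega>) powr p))
        = (\<lambda>n. (1 / (real n + 1)) powr p * (LINT \<omega>|M. norm (X0 \<omega>) powr p))"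
      using eqn by simp
    moreover have "(\<lambda>n. (1 / (real n + 1)) powr p) \<longlonglongrightarrow> 0"
    proof -
      have "(\<lambda>n. 1 / (real n + 1)) \<longlonglongrightarrow> 0"
        using LIMSEQ_inverse_real_of_nat by (simp add: inverse_eq_divide add.commute)
      then have "(\<lambda>n. (1 / (real n + 1)) powr p) \<longlonglongrightarrow> 0 powr p"
        using assms(2) by (intro tendsto_powr') auto
      thus ?thesis using assms(2) by simp
    qed
    ultimately show ?thesis by (simp add: tendsto_mult_left_zero)
  qed
  have "\<rho> (\<lambda>\<omega>. 0) \<le> liminf (\<lambda>n. \<rho> (Xs n))"
  proof -
    have "\<forall>X\<in>Lp_space M p. \<forall>Xs. (\<forall>n. Xs n \<in> Lp_space M p) \<and>
          ((\<lambda>n. (LINT \<omega>|M. norm (Xs n \<omega> - X \<omega>) powr p)) \<longlonglongrightarrow> 0)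
          \<longrightarrow> \<rho> X \<le> liminf (\<lambda>n. \<rho> (Xs n))" using C by blast
    from this[rule_format, OF Z0, of Xs] show ?thesis using Xs_in lim by simp
  qed
  also have "(\<lambda>n. \<rho> (Xs n)) = (\<lambda>n. ereal (r / (real n + 1)))"
  proof
    fix n
    have "\<rho> (Xs n) = ereal (1 / (real n + 1)) * \<rho> X0"
      unfolding Xs_def using C X0(1) by (simp add: add_pos_pos)
    thus "\<rho> (Xs n) = ereal (r / (real n + 1))" using r by simp
  qed
  also have "liminf (\<lambda>n. ereal (r / (real n + 1))) = 0"
  proof (rule lim_imp_Liminf)
    show "(\<lambda>n. ereal (r / (real n + 1))) \<longlonglongrightarrow> 0"
    proof -
      have "(\<lambda>n. 1 / (real n + 1)) \<longlonglongrightarrow> 0"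
        using LIMSEQ_inverse_real_of_nat by (simp add: inverse_eq_divide add.commute)
      then have "(\<lambda>n. r * (1 / (real n + 1))) \<longlonglongrightarrow> 0"
        by (rule tendsto_mult_right_zero)
      thus ?thesis unfolding zero_ereal_def by (simp add: tendsto_ereal)
    qed
  qed simp
  finally have rho0le: "\<rho> (\<lambda>\<omega>. 0) \<le> 0" .
  have "\<rho> (\<lambda>\<omega>. 0) \<noteq> -\<infinity>" using C Z0 by blast
  with rho0le obtain r0 where r0: "\<rho> (\<lambda>\<omega>. 0) = ereal r0"
    by (cases "\<rho> (\<lambda>\<omega>. 0)") auto
  from assms(6) obtain K where K: "risk_conj M p \<rho> \<zeta> \<le> ereal K"
    by (cases "risk_conj M p \<rho> \<zeta>") auto
  define c where "c = (LINT \<omega>|M. inner (\<chi> i. 1) (\<zeta> \<omega>))"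
  have bound: "a * (c - 1) \<le> K + r0" for a :: real
  proof -
    let ?X = "\<lambda>\<omega>. a *\<^sub>R (one_rv \<omega> :: real^'m)"
    have Xin: "?X \<in> Lp_space M p" unfolding one_rv_def using const_in_Lp[OF assms(1)] .
    have "\<rho> (\<lambda>\<omega>. (\<lambda>\<omega>. 0) \<omega> + a *\<^sub>R one_rv \<omega>) = \<rho> (\<lambda>\<omega>. 0) + ereal a * \<rho> one_rv"
    proof -
      have "\<forall>X\<in>Lp_space M p. \<forall>a::real.
          \<rho> (\<lambda>\<omega>. X \<omega> + a *\<^sub>R one_rv \<omega>) = \<rho> X + ereal a * \<rho> one_rv" using C by blast
      from this[rule_format, OF Z0, of a] show ?thesis .
    qed
    hence rX: "\<rho> ?X = ereal (r0 + a)" using r0 assms(4) by simp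
    have pX: "pairing M \<zeta> ?X = a * c"
      unfolding pairing_def c_def one_rv_def
      by (simp add: inner_commute)
    have "ereal (pairing M \<zeta> ?X) - \<rho> ?X \<le> risk_conj M p \<rho> \<zeta>"
      unfolding risk_conj_def using Xin by (rule SUP_upper2) simp
    hence "ereal (a * c - (r0 + a)) \<le> risk_conj M p \<rho> \<zeta>" using rX pX by simp
    hence "ereal (a * c - (r0 + a)) \<le> ereal K" using K by (rule order_trans)
    thus ?thesis by (simp add: algebra_simps)
  qed
  show ?thesis
  proof (rule ccontr)
    assume "(LINT \<omega>|M. inner (\<chi> i. 1) (\<zeta> \<omega>)) \<noteq> 1"
    hence "c - 1 \<noteq> 0" unfolding c_def by simp
    have "((\<bar>K + r0\<bar> + 1) / (c - 1)) * (c - 1) \<le> K + r0" by (rule bound)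
    with \<open>c - 1 \<noteq> 0\<close> show False by simp
  qed
qed

end
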